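(* Let $S>0$, let $D$ be a multiset of $n$ items with sizes in $(0,S]$, let $k\ge 1$ be an integer and $\epsilon\in(0,1/2]$. Consider the following algorithm. (1) Call an item small if its size is at most $\max\{1/n,\epsilon\}\cdot S$ and large otherwise; let $I$, $J$ be the multisets of small and large items. (2) Sort $J$ in non-increasing order of size and partition it into consecutive groups of $g=\lceil n(J)\epsilon^2\rceil$ items (the last group possibly smaller), where $n(J)=|J|$; round each item up to the largest size in its group; let $U'$ be the first group (the $g$ largest items) and $U''$ the instance formed by the remaining rounded items. (3) Put each of the $k$ copies of each item of $U'$ into its own bin. (4) Compute a feasible solution $\mathbf{x}$ of the fractional configuration linear program $F_k$ of $U''$ with $\mathbf{1}\cdot\mathbf{x}\le LIN(U''_k)+1$, and from it construct a $k$-times bin packing of $U''$ using at most $\mathbf{1}\cdot\mathbf{x}+\frac{m(U'')+k}{2}$ bins. (5) Replace each rounded item by its original item, obtaining a $k$-times bin packing of $J$. (6) Insert the $k$ copies of each small item one at a time, each into some existing bin where it fits and which contains no copy of the same item, opening a new bin only if no such bin exists. Then the number $bins(D_k)$ of bins produced satisfies $$bins(D_k)\le(1+2k\epsilon)\,OPT(D_k)+\frac{1}{2\epsilon^2}+(2k+1).$$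
   Context: For a multiset $D$ of items with sizes in $(0,S]$ and integer $k\ge1$, $D_k$ is the collection of $k$ copies of each item; a $k$-times bin packing assigns all copies to bins with total size at most $S$ per bin and no two copies of the same item in one bin; $OPT(D_k)$ is the minimum number of bins. For an instance $W$ with distinct sizes $c[1],\dots,c[m]$ ($m=m(W)$) occurring $n[1],\dots,n[m]$ times, a configuration is a vector $a\in\mathbb{Z}_{\ge0}^m$ with $a_i\le n[i]$ and $\sum_i a_ic[i]\le S$; let $A$ be the $m\times t$ matrix whose columns are all configurations and $\mathbf{n}=(n[1],\dots,n[m])$. The fractional configuration program $F_k$ of $W$ is: minimize $\mathbf{1}\cdot\mathbf{x}$ subject to $A\mathbf{x}=k\mathbf{n}$, $\mathbf{x}\in\mathbb{R}^t_{\ge0}$; its optimal value is $LIN(W_k)$. *)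

theory Defs
  imports Complex_Main
begin

text \<open>Items are identified by natural-number indices; an instance is a finite index
set I together with a size function s. A bin is a set of item indices (so no two
copies of the same item share a bin).\<close>

definition kpacking :: "real \<Rightarrow> (nat \<Rightarrow> real) \<Rightarrow> nat set \<Rightarrow> nat \<Rightarrow> nat set list \<Rightarrow> bool" where
  "kpacking S s I k B \<longleftrightarrow>
     (\<forall>b\<in>set B. b \<subseteq> I \<and> (\<Sum>i\<in>b. s i) \<le> S) \<and>
     (\<forall>i\<in>I. length (filter (\<lambda>b. i \<in> b) B) = k)"

definition OPT :: "real \<Rightarrow> (nat \<Rightarrow> real) \<Rightarrow> nat set \<Rightarrow> nat \<Rightarrow> nat" where
  "OPT S s I k = (LEAST m. \<exists>B. kpacking S s I k B \<and> length B = m)"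

definition mult :: "(nat \<Rightarrow> real) \<Rightarrow> nat set \<Rightarrow> real \<Rightarrow> nat" where
  "mult s I c = card {i\<in>I. s i = c}"

definition configs :: "real \<Rightarrow> (nat \<Rightarrow> real) \<Rightarrow> nat set \<Rightarrow> (real \<Rightarrow> nat) set" where
  "configs S s I = {a. (\<forall>c. c \<notin> s ` I \<longrightarrow> a c = 0) \<and>
                       (\<forall>c\<in>s ` I. a c \<le> mult s I c) \<and>
                       (\<Sum>c\<in>s ` I. real (a c) * c) \<le> S}"

definition lp_feasible :: "real \<Rightarrow> (nat \<Rightarrow> real) \<Rightarrow> nat set \<Rightarrow> nat \<Rightarrow> ((real \<Rightarrow> nat) \<Rightarrow> real) \<Rightarrow> bool" where
  "lp_feasible S s I k x \<longleftrightarrow>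
     (\<forall>a\<in>configs S s I. 0 \<le> x a) \<and>
     (\<forall>c\<in>s ` I. (\<Sum>a\<in>configs S s I. x a * real (a c)) = real k * real (mult s I c))"

definition LIN :: "real \<Rightarrow> (nat \<Rightarrow> real) \<Rightarrow> nat set \<Rightarrow> nat \<Rightarrow> real" where
  "LIN S s I k = Inf {(\<Sum>a\<in>configs S s I. x a) | x. lp_feasible S s I k x}"

definition fits :: "real \<Rightarrow> (nat \<Rightarrow> real) \<Rightarrow> nat \<Rightarrow> nat set \<Rightarrow> bool" where
  "fits S s i b \<longleftrightarrow> i \<notin> b \<and> (\<Sum>j\<in>b. s j) + s i \<le> S"

definition insert_step :: "real \<Rightarrow> (nat \<Rightarrow> real) \<Rightarrow> nat \<Rightarrow> nat set list \<Rightarrow> nat set list \<Rightarrow> bool" where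
  "insert_step S s i B B' \<longleftrightarrow>
     (\<exists>j<length B. fits S s i (B ! j) \<and> B' = B[j := insert i (B ! j)]) \<or>
     ((\<forall>b\<in>set B. \<not> fits S s i b) \<and> B' = B @ [{i}])"

fun insert_run :: "real \<Rightarrow> (nat \<Rightarrow> real) \<Rightarrow> nat list \<Rightarrow> nat set list \<Rightarrow> nat set list \<Rightarrow> bool" where
  "insert_run S s [] B B' = (B' = B)"
| "insert_run S s (i # is) B B' = (\<exists>B1. insert_step S s i B B1 \<and> insert_run S s is B1 B')"

end

theory Submission
  imports Defs
begin


definition cnt :: "nat \<Rightarrow> nat set list \<Rightarrow> nat" where
  "cnt j B = length (filter (\<lambda>b. j \<in> b) B)"

lemma cnt_simps[simp]: "cnt j [] = 0" "cnt j (b # B) = (if j \<in> b then Suc (cnt j B) else cnt j B)"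
  "cnt j (B @ C) = cnt j B + cnt j C"
  by (auto simp: cnt_def)

lemma sum_list_swap:
  fixes w :: "nat \<Rightarrow> real"
  assumes "\<forall>b\<in>set B. b \<subseteq> I" "finite I"
  shows "sum_list (map (\<lambda>b. \<Sum>j\<in>b. w j) B) = (\<Sum>j\<in>I. w j * real (cnt j B))"
  using assms(1)
proof (induction B)
  case Nil then show ?case by simp
next
  case (Cons b B)
  have bI: "b \<subseteq> I" using Cons.prems by simp
  have "(\<Sum>j\<in>b. w j) = (\<Sum>j\<in>I. if j \<in> b then w j else 0)"
    using bI assms(2) by (simp add: sum.If_cases Int_absorb1 inf.absorb2)
  moreover have "(\<Sum>j\<in>I. w j * real (cnt j (b#B))) = (\<Sum>j\<in>I. (if j \<in> b then w j else 0) + w j * real (cnt j B))"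
    by (rule sum.cong) (auto simp: algebra_simps)
  ultimately show ?case using Cons by (simp add: sum.distrib)
qed

lemma sum_list_count_cfg:
  fixes h :: "'b \<Rightarrow> real"
  assumes "finite A" "\<forall>b\<in>set P. f b \<in> A"
  shows "(\<Sum>a\<in>A. real (length (filter (\<lambda>b. f b = a) P)) * h a) = sum_list (map (\<lambda>b. h (f b)) P)"
  using assms(2)
proof (induction P)
  case Nil then show ?case by simp
next
  case (Cons b P)
  have "(\<Sum>a\<in>A. real (length (filter (\<lambda>b. f b = a) (b#P))) * h a)
     = (\<Sum>a\<in>A. (if f b = a then h a else 0) + real (length (filter (\<lambda>b. f b = a) P)) * h a)"
    by (rule sum.cong) (auto simp: algebra_simps)
  also have "\<dots> = h (f b) + (\<Sum>a\<in>A. real (length (filter (\<lambda>b. f b = a) P)) * h a)"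
    using Cons.prems assms(1) by (simp add: sum.distrib sum.delta)
  finally show ?case using Cons by simp
qed

lemma configs_finite:
  assumes "finite I"
  shows "finite (configs S s I)"
proof -
  have "configs S s I \<subseteq> {a. \<forall>c. (c \<in> s ` I \<longrightarrow> a c \<in> {0..card I}) \<and> (c \<notin> s ` I \<longrightarrow> a c = 0)}"
  proof
    fix a assume a: "a \<in> configs S s I"
    have "\<forall>c\<in>s ` I. a c \<le> card I"
    proof
      fix c assume "c \<in> s ` I"
      then have "a c \<le> mult s I c" using a by (auto simp: configs_def)
      also have "\<dots> \<le> card I" unfolding mult_def using assms by (intro card_mono) auto
      finally show "a c \<le> card I" .
    qed
    then show "a \<in> {a. \<forall>c. (c \<in> s ` I \<longrightarrow> a c \<in> {0..card I}) \<and> (c \<notin> s ` I \<longrightarrow> a c = 0)}"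
      using a by (auto simp: configs_def)
  qed
  moreover have "finite {a. \<forall>c. (c \<in> s ` I \<longrightarrow> a c \<in> {0..card I}) \<and> (c \<notin> s ` I \<longrightarrow> (a c::nat) = 0)}"
    by (rule finite_set_of_finite_funs) (use assms in auto)
  ultimately show ?thesis by (rule finite_subset)
qed

lemma LIN_le:
  assumes fin: "finite I" and P: "kpacking S r I k P"
  shows "LIN S r I k \<le> real (length P)"
proof -
  define cfg where "cfg b = (\<lambda>c. if c \<in> r ` I then card {p\<in>b. r p = c} else 0)" for b :: "nat set"
  define x where "x a = real (length (filter (\<lambda>b. cfg b = a) P))" for a
  have Psub: "\<forall>b\<in>set P. b \<subseteq> I" and Pcnt: "\<forall>i\<in>I. cnt i P = k"
    using P by (auto simp: kpacking_def cnt_def)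
  have cfg_in: "cfg b \<in> configs S r I" if "b \<in> set P" for b
  proof -
    have bI: "b \<subseteq> I" and bS: "(\<Sum>i\<in>b. r i) \<le> S" using P that by (auto simp: kpacking_def)
    have fb: "finite b" using bI fin finite_subset by blast
    have "(\<Sum>c\<in>r ` I. real (cfg b c) * c) = (\<Sum>c\<in>r ` I. \<Sum>p\<in>{p\<in>b. r p = c}. r p)"
      by (rule sum.cong) (auto simp: cfg_def)
    also have "\<dots> = (\<Sum>c\<in>r ` b. \<Sum>p\<in>{p\<in>b. r p = c}. r p)"
    proof (intro sum.mono_neutral_right)
      show "\<forall>c\<in>r ` I - r ` b. (\<Sum>p\<in>{p\<in>b. r p = c}. r p) = 0"
      proof
        fix c assume "c \<in> r ` I - r ` b"
        then have "{p\<in>b. r p = c} = {}" by (auto simp: image_iff)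
        then show "(\<Sum>p\<in>{p\<in>b. r p = c}. r p) = 0" by (metis sum.empty)
      qed
    qed (use bI fin in auto)
    also have "\<dots> = (\<Sum>p\<in>b. r p)" using fb by (rule sum.image_gen[symmetric])
    finally have "(\<Sum>c\<in>r ` I. real (cfg b c) * c) \<le> S" using bS by simp
    moreover have "cfg b c \<le> mult r I c" if "c \<in> r ` I" for c
      unfolding cfg_def mult_def using that bI fin by (auto intro!: card_mono)
    ultimately show ?thesis by (auto simp: configs_def cfg_def)
  qed
  have cfin: "finite (configs S r I)" using fin by (rule configs_finite)
  have feas: "lp_feasible S r I k x"
    unfolding lp_feasible_def
  proof (intro conjI ballI)
    fix a show "0 \<le> x a" by (simp add: x_def)
  next
    fix c assume c: "c \<in> r ` I"
    have "(\<Sum>a\<in>configs S r I. x a * real (a c)) = sum_list (map (\<lambda>b. real (cfg b c)) P)"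
      unfolding x_def using sum_list_count_cfg[OF cfin, of P cfg "\<lambda>a. real (a c)"] cfg_in by auto
    also have "\<dots> = sum_list (map (\<lambda>b. \<Sum>j\<in>b. (if r j = c then 1 else 0)) P)"
    proof -
      have "real (cfg b c) = (\<Sum>j\<in>b. (if r j = c then 1 else 0))" if "b \<in> set P" for b
      proof -
        have "finite b" using Psub that fin finite_subset by blast
        then show ?thesis using c by (simp add: cfg_def sum.If_cases Int_def conj_commute)
      qed
      then show ?thesis by (intro arg_cong[where f=sum_list] map_cong) auto
    qed
    also have "\<dots> = (\<Sum>j\<in>I. (if r j = c then 1 else 0) * real (cnt j P))"
      by (rule sum_list_swap[OF Psub fin])
    also have "\<dots> = (\<Sum>j\<in>I. (if r j = c then real k else 0))"
      using Pcnt by (intro sum.cong) auto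
    also have "\<dots> = real k * real (mult r I c)"
      using fin by (simp add: sum.If_cases mult_def Int_def)
    finally show "(\<Sum>a\<in>configs S r I. x a * real (a c)) = real k * real (mult r I c)" .
  qed
  have val: "(\<Sum>a\<in>configs S r I. x a) = real (length P)"
    unfolding x_def using sum_list_count_cfg[OF cfin, of P cfg "\<lambda>a. 1"] cfg_in
    by (simp add: sum_list_triv)
  have "LIN S r I k \<le> (\<Sum>a\<in>configs S r I. x a)"
    unfolding LIN_def
  proof (rule cInf_lower)
    show "(\<Sum>a\<in>configs S r I. x a) \<in> {\<Sum>a\<in>configs S r I. x a |x. lp_feasible S r I k x}"
      using feas by blast
    show "bdd_below {\<Sum>a\<in>configs S r I. x a |x. lp_feasible S r I k x}"
      by (rule bdd_belowI[of _ 0]) (auto simp: lp_feasible_def intro!: sum_nonneg)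
  qed
  then show ?thesis using val by simp
qed



lemma cnt_update:
  "j < length B \<Longrightarrow> cnt p (B[j:=x]) + (if p \<in> B!j then 1 else 0) = cnt p B + (if p \<in> x then 1 else 0)"
proof (induction B arbitrary: j)
  case Nil then show ?case by simp
next
  case (Cons b B) then show ?case by (cases j) auto
qed

lemma run_bound:
  assumes "insert_run S d xs B Bf"
   and "\<forall>b\<in>set B. b \<subseteq> {..<n}" "\<forall>j<n. cnt j B + count_list xs j \<le> k" "set xs \<subseteq> A" "A \<subseteq> {..<n}"
   "real (length B) \<le> M"
   and step: "\<And>B i. \<forall>b\<in>set B. b \<subseteq> {..<n} \<Longrightarrow> \<forall>j<n. cnt j B \<le> k \<Longrightarrow> i \<in> A \<Longrightarrow> cnt i B < k
      \<Longrightarrow> \<forall>b\<in>set B. \<not> fits S d i b \<Longrightarrow> real (length B) + 1 \<le> M"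
  shows "real (length Bf) \<le> M"
  using assms(1-6)
proof (induction xs arbitrary: B)
  case Nil then show ?case by simp
next
  case (Cons i xs)
  from Cons.prems(1) obtain B1 where st: "insert_step S d i B B1" and rn: "insert_run S d xs B1 Bf" by auto
  have iA: "i \<in> A" and xsA: "set xs \<subseteq> A" using Cons.prems by auto
  have iN: "i < n" using iA Cons.prems(5) by auto
  have ci: "cnt i B < k" using Cons.prems(3) iN by auto
  have cB: "\<forall>j<n. cnt j B \<le> k" using Cons.prems(3) by (metis add_leE)
  from st show ?case unfolding insert_step_def
  proof (elim disjE exE conjE)
    fix j assume j: "j < length B" and f: "fits S d i (B ! j)" and B1: "B1 = B[j := insert i (B ! j)]"
    have iB: "i \<notin> B ! j" using f by (simp add: fits_def)
    show ?thesis
    proof (rule Cons.IH[OF rn])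
      show "\<forall>b\<in>set B1. b \<subseteq> {..<n}" unfolding B1 using Cons.prems(2) iN j
        by (auto dest!: set_update_subset_insert[THEN subsetD])
      show "\<forall>j<n. cnt j B1 + count_list xs j \<le> k"
      proof (intro allI impI)
        fix p assume p: "p < n"
        have "cnt p B1 + (if p \<in> B!j then 1 else 0) = cnt p B + (if p \<in> insert i (B!j) then 1 else 0)"
          unfolding B1 using cnt_update[OF j] by blast
        then show "cnt p B1 + count_list xs p \<le> k" using Cons.prems(3) p iB
          by (cases "p = i") (auto split: if_splits)
      qed
      show "set xs \<subseteq> A" by fact
      show "A \<subseteq> {..<n}" by fact
      show "real (length B1) \<le> M" using B1 Cons.prems(6) by simp
    qed
  next
    assume nf: "\<forall>b\<in>set B. \<not> fits S d i b" and B1: "B1 = B @ [{i}]"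
    have M: "real (length B) + 1 \<le> M" using step[OF Cons.prems(2) cB iA ci nf] .
    show ?thesis
    proof (rule Cons.IH[OF rn])
      show "\<forall>b\<in>set B1. b \<subseteq> {..<n}" unfolding B1 using Cons.prems(2) iN by auto
      show "\<forall>j<n. cnt j B1 + count_list xs j \<le> k"
        using Cons.prems(3) unfolding B1 by (auto split: if_splits)
      show "set xs \<subseteq> A" by fact
      show "A \<subseteq> {..<n}" by fact
      show "real (length B1) \<le> M" using B1 M by simp
    qed
  qed
qed



lemma cnt_filter_le: "cnt j (filter P B) \<le> cnt j B"
  by (induction B) auto

lemma sum_list_gt:
  fixes f :: "'a \<Rightarrow> real"
  assumes "\<forall>x\<in>set xs. f x > c" "xs \<noteq> []"
  shows "sum_list (map f xs) > real (length xs) * c"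
  using assms
proof (induction xs)
  case Nil then show ?case by simp
next
  case (Cons a xs)
  show ?case
  proof (cases "xs = []")
    case True then show ?thesis using Cons by simp
  next
    case False then show ?thesis using Cons by (simp add: algebra_simps)
  qed
qed

lemma open_bound:
  fixes S \<epsilon> :: real and d :: "nat \<Rightarrow> real" and Opt :: nat
  assumes S_pos: "S > 0" and sizes: "\<forall>j<n. 0 < d j \<and> d j \<le> S" and n_pos: "n > 0"
    and eps_pos: "0 < \<epsilon>" and eps_le: "\<epsilon> \<le> 1/2"
    and Bsub: "\<forall>b\<in>set B. b \<subseteq> {..<n}" and Bcnt: "\<forall>j<n. cnt j B \<le> k"
    and iN: "i < n" and ismall: "d i \<le> max (1 / real n) \<epsilon> * S" and ci: "cnt i B < k"
    and nf: "\<forall>b\<in>set B. \<not> fits S d i b"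
    and OS: "real k * (\<Sum>j<n. d j) \<le> real Opt * S"
  shows "real (length B) + 1 \<le> (1 + 2 * real k * \<epsilon>) * real Opt + 1 / (2 * \<epsilon>^2) + (2 * real k + 1)"
proof -
  define F where "F = filter (\<lambda>b. i \<notin> b) B"
  define T where "T = (\<Sum>j<n. d j)"
  define W where "W = sum_list (map (\<lambda>b. \<Sum>j\<in>b. d j) F)"
  have lenB: "length B = cnt i B + length F"
    unfolding F_def cnt_def using sum_length_filter_compl[of "\<lambda>b. i \<in> b" B] by simp
  have Fsub: "\<forall>b\<in>set F. b \<subseteq> {..<n}" using Bsub by (auto simp: F_def)
  have W_eq: "W = (\<Sum>j<n. d j * real (cnt j F))"
    unfolding W_def by (rule sum_list_swap[OF Fsub]) simp
  have cF: "cnt j F \<le> k" if "j < n" for j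
    using cnt_filter_le[of j _ B] Bcnt that unfolding F_def by (meson le_trans)
  have cFi: "cnt i F = 0" unfolding F_def cnt_def by (simp add: filter_filter)
  have "W \<le> (\<Sum>j<n. if j = i then 0 else d j * real k)"
    unfolding W_eq
  proof (rule sum_mono)
    fix j assume "j \<in> {..<n}"
    then show "d j * real (cnt j F) \<le> (if j = i then 0 else d j * real k)"
      using cF[of j] cFi sizes by (auto intro!: mult_left_mono)
  qed
  also have "\<dots> = real k * (T - d i)"
  proof -
    have "(\<Sum>j<n. if j = i then 0 else d j * real k) = (\<Sum>j<n. d j * real k) - d i * real k"
      using iN by (simp add: sum.If_cases Diff_eq[symmetric] sum_diff1)
    then show ?thesis by (simp add: T_def sum_distrib_left algebra_simps)
  qed
  finally have W_le: "W \<le> real k * (T - d i)" .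
  have Fgt: "\<forall>b\<in>set F. (\<Sum>j\<in>b. d j) > S - d i"
    using nf unfolding F_def fits_def by auto
  have W_ge: "W \<ge> real (length F) * (S - d i)"
  proof (cases "F = []")
    case True then show ?thesis by (simp add: W_def)
  next
    case False then show ?thesis using sum_list_gt[OF Fgt False] by (simp add: W_def)
  qed
  have di_pos: "d i > 0" and di_le: "d i \<le> S" using sizes iN by auto
  have ck: "real (cnt i B) \<le> real k - 1" using ci by linarith
  have O_nonneg: "0 \<le> real Opt" by simp
  have RHS_ge: "real Opt + 2 * real k \<le> (1 + 2 * real k * \<epsilon>) * real Opt + 1 / (2 * \<epsilon>^2) + (2 * real k + 1)"
    using eps_pos by (simp add: algebra_simps)
  show ?thesis
  proof (cases "1 / real n \<le> \<epsilon>")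
    case True
    then have dle: "d i \<le> \<epsilon> * S" using ismall by simp
    have "real (length F) * (S * (1 - \<epsilon>)) \<le> real (length F) * (S - d i)"
      using dle by (intro mult_left_mono) (auto simp: algebra_simps)
    also have "\<dots> \<le> real k * (T - d i)" using W_ge W_le by linarith
    also have "\<dots> \<le> real k * T" using di_pos by (simp add: mult_left_mono)
    also have "\<dots> \<le> real Opt * S" using OS by (simp add: T_def)
    finally have "(real (length F) * (1 - \<epsilon>)) * S \<le> real Opt * S" by (simp add: algebra_simps)
    then have h1: "real (length F) * (1 - \<epsilon>) \<le> real Opt" using S_pos by simp
    have "real (length F) \<le> real (length F) * ((1 - \<epsilon>) * (1 + 2 * \<epsilon>))"
    proof -
      have "(1 - \<epsilon>) * (1 + 2 * \<epsilon>) = 1 + \<epsilon> * (1 - 2 * \<epsilon>)" by (simp add: algebra_simps power2_eq_square)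
      moreover have "\<epsilon> * (1 - 2 * \<epsilon>) \<ge> 0" using eps_pos eps_le by simp
      moreover have "real (length F) * (\<epsilon> * (1 - 2 * \<epsilon>)) \<ge> 0" using calculation(2) by simp
      ultimately show ?thesis by (simp only: distrib_left mult_1_right)
    qed
    also have "\<dots> = (real (length F) * (1 - \<epsilon>)) * (1 + 2 * \<epsilon>)" by (simp add: algebra_simps)
    also have "\<dots> \<le> real Opt * (1 + 2 * \<epsilon>)" using h1 eps_pos by (intro mult_right_mono) auto
    finally have hF: "real (length F) \<le> real Opt * (1 + 2 * \<epsilon>)" .
    have "real Opt * (2 * \<epsilon>) \<le> real Opt * (2 * real k * \<epsilon>)"
      using eps_pos \<open>cnt i B < k\<close> by (intro mult_left_mono) auto
    moreover have "1 / (2 * \<epsilon>^2) \<ge> 0" by simp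
    moreover have "real (length B) = real (cnt i B) + real (length F)" using lenB by simp
    ultimately show ?thesis using hF ck by (simp only: algebra_simps)
  next
    case False
    then have dle: "d i \<le> S / real n" using ismall by (simp add: max_def)
    have Tle: "T \<le> real n * S"
      unfolding T_def using sum_bounded_above[of "{..<n}" d S] sizes by auto
    have TdS: "T * d i \<le> S * S"
    proof -
      have "T * d i \<le> (real n * S) * (S / real n)"
        using Tle dle di_pos n_pos S_pos by (intro mult_mono) (auto simp: T_def intro!: sum_nonneg less_imp_le)
      also have "\<dots> = S * S" using n_pos by simp
      finally show ?thesis .
    qed
    show ?thesis
    proof (cases "F = []")
      case True
      then show ?thesis using lenB ck RHS_ge by simp
    next
      case Fne: False
      have "real (length F) * (S - d i) < W" using sum_list_gt[OF Fgt Fne] by (simp add: W_def)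
      also have "\<dots> \<le> real k * (T - d i)" by (rule W_le)
      also have "\<dots> \<le> (real k * T / S + real k) * (S - d i)"
      proof -
        have "real k * T * d i \<le> real k * (S * S)" using TdS by (simp add: mult_left_mono mult.assoc)
        then have "real k * T * d i / S \<le> real k * S" using S_pos by (simp add: divide_le_eq algebra_simps)
        then show ?thesis using S_pos by (simp add: algebra_simps add_divide_distrib diff_divide_distrib)
      qed
      finally have "real (length F) * (S - d i) < (real k * T / S + real k) * (S - d i)" .
      then have hF: "real (length F) < real k * T / S + real k"
        using di_le by (metis mult_right_less_imp_less diff_ge_0_iff_ge)
      have "real k * T / S \<le> real Opt" using OS S_pos by (simp add: T_def pos_divide_le_eq)
      then show ?thesis using hF lenB ck RHS_ge by simp
    qed
  qed
qed



lemma cnt_replicate[simp]: "cnt j (replicate k b) = (if j \<in> b then k else 0)"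
  by (induction k) auto

lemma cnt_concat_rep: "cnt j (concat (map (\<lambda>p. replicate k {f p}) xs)) = k * count_list (map f xs) j"
  by (induction xs) auto

lemma count_list_rep: "count_list (concat (map (\<lambda>i. replicate k i) xs)) j = k * count_list xs j"
proof (induction xs)
  case Nil then show ?case by simp
next
  case (Cons a xs)
  have "count_list (replicate k a) j = (if a = j then k else 0)" by (induction k) auto
  then show ?case using Cons by simp
qed

lemma count_list_distinct: "distinct xs \<Longrightarrow> count_list xs x = (if x \<in> set xs then 1 else 0)"
  by (induction xs) auto

lemma cnt_map: "cnt p (map f B) = length (filter (\<lambda>b. p \<in> f b) B)"
  by (simp add: cnt_def filter_map o_def)

lemma cnt_zero: "\<forall>b\<in>set B. q \<notin> b \<Longrightarrow> cnt q B = 0"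
  by (simp add: cnt_def filter_False)

lemma pack_weight:
  assumes "kpacking S d {..<n} k Bs"
  shows "real k * (\<Sum>j<n. d j) \<le> real (length Bs) * S"
proof -
  have sub: "\<forall>b\<in>set Bs. b \<subseteq> {..<n}" and c: "\<forall>i<n. cnt i Bs = k" and bS: "\<forall>b\<in>set Bs. (\<Sum>i\<in>b. d i) \<le> S"
    using assms by (auto simp: kpacking_def cnt_def)
  have "real k * (\<Sum>j<n. d j) = (\<Sum>j<n. d j * real (cnt j Bs))"
    using c by (simp add: sum_distrib_left mult.commute)
  also have "\<dots> = sum_list (map (\<lambda>b. \<Sum>j\<in>b. d j) Bs)"
    by (rule sum_list_swap[OF sub, symmetric]) simp
  also have "\<dots> \<le> sum_list (map (\<lambda>b. S) Bs)" by (rule sum_list_mono) (use bS in auto)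
  also have "\<dots> = real (length Bs) * S" by (simp add: sum_list_triv)
  finally show ?thesis .
qed

theorem theorem5:
  fixes S \<epsilon> :: real and n k :: nat and d :: "nat \<Rightarrow> real"
    and js smalls :: "nat list" and x :: "(real \<Rightarrow> nat) \<Rightarrow> real"
    and P2 Bf :: "nat set list"
  assumes S_pos: "S > 0" and n_pos: "n > 0"
    and sizes: "\<forall>i<n. 0 < d i \<and> d i \<le> S"
    and k_ge: "k \<ge> 1" and eps_pos: "0 < \<epsilon>" and eps_le: "\<epsilon> \<le> 1/2"
  defines "Sm \<equiv> {i. i < n \<and> d i \<le> max (1 / real n) \<epsilon> * S}"
    and "Lg \<equiv> {i. i < n \<and> \<not> d i \<le> max (1 / real n) \<epsilon> * S}"
  assumes js_distinct: "distinct js" and js_set: "set js = Lg"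
    and js_sorted: "sorted_wrt (\<lambda>a b. d b \<le> d a) js"
  defines "g \<equiv> nat \<lceil>real (length js) * \<epsilon>^2\<rceil>"
  defines "r \<equiv> (\<lambda>p. d (js ! (g * (p div g))))"
    and "U2 \<equiv> {g..<length js}"
  assumes x_feas: "lp_feasible S r U2 k x"
    and x_opt: "(\<Sum>a\<in>configs S r U2. x a) \<le> LIN S r U2 k + 1"
    and P2_pack: "kpacking S r U2 k P2"
    and P2_len: "real (length P2) \<le> (\<Sum>a\<in>configs S r U2. x a) + (real (card (r ` U2)) + real k) / 2"
  defines "B0 \<equiv> concat (map (\<lambda>p. replicate k {js ! p}) [0..<min g (length js)])
                 @ map (\<lambda>b. (\<lambda>p. js ! p) ` b) P2"
  assumes smalls_distinct: "distinct smalls" and smalls_set: "set smalls = Sm"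
    and run: "insert_run S d (concat (map (\<lambda>i. replicate k i) smalls)) B0 Bf"
  shows "real (length Bf) \<le> (1 + 2 * real k * \<epsilon>) * real (OPT S d {..<n} k)
           + 1 / (2 * \<epsilon>^2) + (2 * real k + 1)"
proof -
  define Opt where "Opt = OPT S d {..<n} k"
  define T where "T = (\<Sum>j<n. d j)"
  define L where "L = length js"
  define xs0 where "xs0 = concat (map (\<lambda>i. replicate k i) smalls)"
  define RHS where "RHS = (1 + 2 * real k * \<epsilon>) * real Opt + 1 / (2 * \<epsilon>^2) + (2 * real k + 1)"
  have Lg_sub: "Lg \<subseteq> {..<n}" and Sm_sub: "Sm \<subseteq> {..<n}" by (auto simp: Lg_def Sm_def)
  have SmLg: "Sm \<inter> Lg = {}" by (auto simp: Lg_def Sm_def)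
  have d_nn: "\<And>j. j < n \<Longrightarrow> 0 \<le> d j" using sizes by (auto intro: less_imp_le)
  define W0 where "W0 = concat (map (\<lambda>p. replicate k {id p}) [0..<n])"
  have W0pack: "kpacking S d {..<n} k W0"
    unfolding kpacking_def
  proof (rule conjI; intro ballI)
    fix b assume "b \<in> set W0"
    then obtain i where "i < n" "b = {i}" by (auto simp: W0_def)
    then show "b \<subseteq> {..<n} \<and> (\<Sum>i\<in>b. d i) \<le> S" using sizes by auto
  next
    fix i assume "i \<in> {..<n}"
    then show "length (filter (\<lambda>b. i \<in> b) W0) = k"
      using cnt_concat_rep[of i k id "[0..<n]"] by (simp add: W0_def cnt_def count_list_distinct)
  qed
  obtain Bs where Bs: "kpacking S d {..<n} k Bs" "length Bs = Opt"
    using LeastI_ex[of "\<lambda>m. \<exists>B. kpacking S d {..<n} k B \<and> length B = m"] W0pack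
    unfolding Opt_def OPT_def by blast
  have OS: "real k * T \<le> real Opt * S" using pack_weight[OF Bs(1)] Bs(2) by (simp add: T_def)
  have L_card: "L = card Lg" using distinct_card[OF js_distinct] js_set by (simp add: L_def)
  have Lg_big: "\<epsilon> * S < d j" if "j \<in> Lg" for j
  proof -
    have "\<epsilon> * S \<le> max (1 / real n) \<epsilon> * S" using S_pos by (intro mult_right_mono) auto
    then show ?thesis using that by (auto simp: Lg_def)
  qed
  have finLg: "finite Lg" using Lg_sub finite_subset by blast
  have "real L * (\<epsilon> * S) \<le> (\<Sum>j\<in>Lg. d j)"
    using sum_bounded_below[of Lg "\<epsilon> * S" d] Lg_big L_card by (auto intro: less_imp_le)
  also have "\<dots> \<le> T" unfolding T_def using Lg_sub d_nn by (intro sum_mono2) auto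
  finally have "real L * (\<epsilon> * S) \<le> T" .
  then have "real k * (real L * (\<epsilon> * S)) \<le> real k * T" by (rule mult_left_mono) simp
  then have "real k * (real L * \<epsilon>) * S \<le> real Opt * S"
    using OS by (simp only: mult.assoc)
  then have OL: "real k * real L * \<epsilon> \<le> real Opt" using S_pos by (simp add: mult.assoc)
  have g_ge: "real L * \<epsilon>^2 \<le> real g" unfolding g_def L_def by (rule real_nat_ceiling_ge)
  have g_le: "real g \<le> real L * \<epsilon>^2 + 1"
  proof -
    have "real_of_int \<lceil>real L * \<epsilon>^2\<rceil> < real L * \<epsilon>^2 + 1" by linarith
    moreover have "0 \<le> real L * \<epsilon>^2" by simp
    then have "0 \<le> \<lceil>real L * \<epsilon>^2\<rceil>" by (metis ceiling_mono ceiling_zero)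
    ultimately show ?thesis unfolding g_def L_def by simp
  qed
  have g_pos: "0 < g" if "0 < L"
  proof -
    have "0 < real L * \<epsilon>^2" using that eps_pos by simp
    then show ?thesis using g_ge by linarith
  qed
  define Q where "Q = map (\<lambda>b. {p\<in>U2. js!(p-g) \<in> b}) Bs"
  have r_le: "r p \<le> d (js ! (p - g))" if p: "p \<in> U2" for p
  proof -
    have pL: "g \<le> p" "p < L" using p by (auto simp: U2_def L_def)
    then have gp: "0 < g" using g_pos by linarith
    define a where "a = g * (p div g)"
    have a1: "a \<le> p" unfolding a_def by (metis div_mult_self1_is_m div_times_less_eq_dividend mult.commute gp)
    have a2: "p - g \<le> a"
    proof -
      have "p = g * (p div g) + p mod g" by simp
      moreover have "p mod g < g" using gp by simp
      ultimately show ?thesis unfolding a_def by linarith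
    qed
    show ?thesis
    proof (cases "p - g = a")
      case True then show ?thesis by (simp add: r_def a_def)
    next
      case False
      then have "p - g < a" using a2 by simp
      then have "d (js ! a) \<le> d (js ! (p - g))"
        using sorted_wrt_nth_less[OF js_sorted, of "p - g" a] a1 pL by (simp add: L_def)
      then show ?thesis by (simp add: r_def a_def)
    qed
  qed
  have Qpack: "kpacking S r U2 k Q"
    unfolding kpacking_def
  proof (rule conjI; intro ballI)
    fix b' assume "b' \<in> set Q"
    then obtain b where b: "b \<in> set Bs" and b': "b' = {p\<in>U2. js!(p-g) \<in> b}" by (auto simp: Q_def)
    have bsub: "b \<subseteq> {..<n}" and bS: "(\<Sum>i\<in>b. d i) \<le> S" using Bs(1) b by (auto simp: kpacking_def)
    have inj: "inj_on (\<lambda>p. js!(p-g)) b'"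
    proof
      fix p q assume "p \<in> b'" "q \<in> b'" "js!(p-g) = js!(q-g)"
      moreover have "p - g < length js" "q - g < length js" using calculation by (auto simp: b' U2_def)
      ultimately have "p - g = q - g" using nth_eq_iff_index_eq[OF js_distinct, of "p-g" "q-g"] by simp
      then show "p = q" using \<open>p \<in> b'\<close> \<open>q \<in> b'\<close> by (auto simp: b' U2_def)
    qed
    have "(\<Sum>p\<in>b'. r p) \<le> (\<Sum>p\<in>b'. d (js!(p-g)))"
      by (rule sum_mono) (use r_le b' in auto)
    also have "\<dots> = (\<Sum>j\<in>(\<lambda>p. js!(p-g)) ` b'. d j)" by (simp add: sum.reindex[OF inj])
    also have "\<dots> \<le> (\<Sum>j\<in>b. d j)"
      using bsub d_nn by (intro sum_mono2) (auto simp: b' finite_subset)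
    finally show "b' \<subseteq> U2 \<and> (\<Sum>i\<in>b'. r i) \<le> S" using bS by (auto simp: b')
  next
    fix p assume p: "p \<in> U2"
    have "js!(p-g) \<in> Lg" using p js_set by (auto simp: U2_def)
    then have "cnt (js!(p-g)) Bs = k" using Bs(1) Lg_sub by (auto simp: kpacking_def cnt_def)
    then show "length (filter (\<lambda>b. p \<in> b) Q) = k"
      using p cnt_map[of p "\<lambda>b. {p\<in>U2. js!(p-g) \<in> b}" Bs] by (simp add: Q_def cnt_def)
  qed
  have LIN_le_Opt: "LIN S r U2 k \<le> real Opt"
    using LIN_le[OF _ Qpack] Bs(2) by (simp add: U2_def Q_def)
  have m_bound: "real (card (r ` U2)) \<le> 1 / \<epsilon>^2"
  proof (cases "L = 0")
    case True then show ?thesis by (simp add: U2_def L_def)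
  next
    case False
    then have gp: "0 < g" using g_pos by simp
    have "r ` U2 = (\<lambda>q. d (js ! (g * q))) ` ((\<lambda>p. p div g) ` U2)" by (simp only: r_def image_image)
    then have "card (r ` U2) \<le> card ((\<lambda>p. p div g) ` U2)" by (simp add: card_image_le U2_def)
    also have "\<dots> \<le> card {1..(L - 1) div g}"
    proof (rule card_mono)
      show "(\<lambda>p. p div g) ` U2 \<subseteq> {1..(L - 1) div g}"
      proof
        fix y assume "y \<in> (\<lambda>p. p div g) ` U2"
        then obtain p where p: "g \<le> p" "p < L" "y = p div g" by (auto simp: U2_def L_def)
        have "1 \<le> p div g" using p gp by (simp add: div_le_mono[of g p g, simplified] Suc_le_eq div_greater_zero_iff)
        moreover have "p div g \<le> (L - 1) div g" using p by (intro div_le_mono) simp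
        ultimately show "y \<in> {1..(L - 1) div g}" using p by simp
      qed
    qed simp
    also have "\<dots> = (L - 1) div g" by simp
    finally have m1: "card (r ` U2) * g \<le> L"
      by (meson div_times_less_eq_dividend diff_le_self le_trans mult_le_mono1)
    have "real (card (r ` U2)) * (real L * \<epsilon>^2) \<le> real (card (r ` U2)) * real g"
      using g_ge by (intro mult_left_mono) auto
    also have "\<dots> \<le> real L" using m1 by (metis of_nat_le_iff of_nat_mult)
    finally have "(real (card (r ` U2)) * \<epsilon>^2) * real L \<le> 1 * real L" by (simp add: algebra_simps)
    then have "real (card (r ` U2)) * \<epsilon>^2 \<le> 1" using False by simp
    then show ?thesis using eps_pos by (simp add: le_divide_eq)
  qed
  have lenB0: "length B0 = k * min g L + length P2"
    by (simp add: B0_def length_concat sum_list_triv L_def o_def)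
  have B0_RHS: "real (length B0) \<le> RHS"
  proof -
    have "real (k * min g L) \<le> real k * real g" by (metis min.cobounded1 mult_le_mono2 of_nat_le_iff of_nat_mult)
    also have "\<dots> \<le> real k * (real L * \<epsilon>^2 + 1)" using g_le by (intro mult_left_mono) auto
    also have "\<dots> = (real k * real L * \<epsilon>) * \<epsilon> + real k" by (simp add: algebra_simps power2_eq_square)
    also have "\<dots> \<le> real Opt * \<epsilon> + real k" using OL eps_pos by (simp add: mult_right_mono)
    finally have h1: "real (k * min g L) \<le> real Opt * \<epsilon> + real k" .
    have h2: "real (length P2) \<le> real Opt + 1 + (1 / \<epsilon>^2 + real k) / 2"
    proof -
      have "(real (card (r ` U2)) + real k) / 2 \<le> (1 / \<epsilon>^2 + real k) / 2"
        using m_bound by (intro divide_right_mono) auto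
      then show ?thesis using P2_len x_opt LIN_le_Opt by linarith
    qed
    have h3: "real Opt * \<epsilon> \<le> 2 * real k * \<epsilon> * real Opt"
    proof -
      have "real Opt * \<epsilon> * 1 \<le> real Opt * \<epsilon> * (2 * real k)" using k_ge eps_pos
        by (intro mult_left_mono) auto
      then show ?thesis by (simp add: algebra_simps)
    qed
    have h4: "(1 / \<epsilon>^2 + real k) / 2 = 1 / (2 * \<epsilon>^2) + real k / 2" by (simp add: add_divide_distrib)
    have h5: "real (length B0) = real (k * min g L) + real (length P2)" using lenB0 by simp
    have h6: "0 \<le> real Opt * \<epsilon>" using eps_pos by simp
    show ?thesis unfolding RHS_def using h1 h2 h3 h4 h5 h6 k_ge by (simp only: algebra_simps)
  qed
  have B0sub: "\<forall>b\<in>set B0. b \<subseteq> Lg"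
  proof
    fix b assume "b \<in> set B0"
    then have "(\<exists>p. p < min g (length js) \<and> b = {js ! p}) \<or> (\<exists>b2. b2 \<in> set P2 \<and> b = (\<lambda>p. js ! p) ` b2)"
      unfolding B0_def by auto
    then consider (a) p where "p < min g (length js)" "b = {js ! p}"
      | (c) b2 where "b2 \<in> set P2" "b = (\<lambda>p. js ! p) ` b2"
      by blast
    then show "b \<subseteq> Lg"
    proof cases
      case a then show ?thesis using js_set by auto
    next
      case c
      have "b2 \<subseteq> U2" using c P2_pack by (auto simp: kpacking_def)
      then show ?thesis using c js_set by (auto simp: U2_def)
    qed
  qed
  have B0sub': "\<forall>b\<in>set B0. b \<subseteq> {..<n}" using B0sub Lg_sub by blast
  have xs0_set: "set xs0 \<subseteq> Sm" using smalls_set by (auto simp: xs0_def)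
  have init_cnt: "\<forall>j<n. cnt j B0 + count_list xs0 j \<le> k"
  proof (intro allI impI)
    fix j assume jn: "j < n"
    have cl: "count_list xs0 j = k * count_list smalls j" by (simp add: xs0_def count_list_rep)
    show "cnt j B0 + count_list xs0 j \<le> k"
    proof (cases "j \<in> Lg")
      case False
      then have "cnt j B0 = 0" using B0sub by (intro cnt_zero) auto
      then show ?thesis using cl count_list_distinct[OF smalls_distinct, of j] by simp
    next
      case True
      then have c0: "count_list xs0 j = 0" using cl SmLg smalls_set by auto
      obtain q where q: "q < L" "j = js ! q" using True js_set by (metis L_def in_set_conv_nth)
      define G where "G = min g (length js)"
      have GL: "G \<le> L" by (simp add: G_def L_def)
      have dist: "distinct (map (\<lambda>p. js ! p) [0..<G])"
        using GL by (auto simp: distinct_map inj_on_def nth_eq_iff_index_eq[OF js_distinct] L_def)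
      have c1: "cnt j (concat (map (\<lambda>p. replicate k {js ! p}) [0..<G])) \<le> (if q < G then k else 0)"
      proof -
        have "count_list (map (\<lambda>p. js ! p) [0..<G]) j = (if j \<in> (\<lambda>p. js!p) ` {0..<G} then 1 else 0)"
          using count_list_distinct[OF dist] by simp
        also have "\<dots> = (if q < G then 1 else 0)"
          using q GL nth_eq_iff_index_eq[OF js_distinct] by (auto simp: L_def)
        finally show ?thesis using cnt_concat_rep[of j k "\<lambda>p. js ! p" "[0..<G]"] by simp
      qed
      have P2sub: "\<forall>b\<in>set P2. b \<subseteq> U2" using P2_pack by (auto simp: kpacking_def)
      have "cnt j (map (\<lambda>b. (\<lambda>p. js ! p) ` b) P2) = length (filter (\<lambda>b. j \<in> (\<lambda>p. js ! p) ` b) P2)"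
        by (rule cnt_map)
      also have "\<dots> = cnt q P2"
        unfolding cnt_def
      proof (intro arg_cong[where f=length] filter_cong refl)
        fix b assume "b \<in> set P2"
        then have "b \<subseteq> {..<L}" using P2sub by (force simp: U2_def L_def)
        then show "(j \<in> (\<lambda>p. js ! p) ` b) = (q \<in> b)"
          using q nth_eq_iff_index_eq[OF js_distinct] by (auto simp: L_def)
      qed
      finally have c2: "cnt j (map (\<lambda>b. (\<lambda>p. js ! p) ` b) P2) = cnt q P2" .
      have c3: "cnt q P2 \<le> (if q \<in> U2 then k else 0)"
      proof (cases "q \<in> U2")
        case True then show ?thesis using P2_pack by (simp add: kpacking_def cnt_def)
      next
        case False then show ?thesis using P2sub cnt_zero[of P2 q] by auto
      qed
      have "q < G \<Longrightarrow> q \<notin> U2" by (simp add: G_def U2_def)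
      then have "cnt j B0 \<le> k" using c1 c2 c3 unfolding B0_def G_def[symmetric]
        by (auto split: if_splits)
      then show ?thesis using c0 by simp
    qed
  qed
  have "real (length Bf) \<le> RHS"
  proof (rule run_bound[OF run[folded xs0_def] B0sub' init_cnt xs0_set Sm_sub B0_RHS])
    fix B i assume a: "\<forall>b\<in>set B. b \<subseteq> {..<n}" "\<forall>j<n. cnt j B \<le> k" "i \<in> Sm" "cnt i B < k"
      "\<forall>b\<in>set B. \<not> fits S d i b"
    have "i < n" "d i \<le> max (1 / real n) \<epsilon> * S" using a(3) by (auto simp: Sm_def)
    then show "real (length B) + 1 \<le> RHS" unfolding RHS_def
      by (rule open_bound[OF S_pos sizes n_pos eps_pos eps_le a(1,2) _ _ a(4,5)]) (use OS T_def in simp)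
  qed
  then show ?thesis by (simp add: RHS_def Opt_def)
qed

end
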